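(* If a polynomial dynamical system $\frac{d\mathbf{x}}{dt}=f(\mathbf{x})$ on $\mathbb{R}^d_{\ge 0}$ is weakly reversible, then it is generated by a weakly reversible reaction network whose set of source nodes is the set of exponent vectors of the monomials of $f$.
   Context: A reaction network (E-graph) $\mathcal{G}=(\mathcal{V},\mathcal{E})$ is a finite directed graph whose nodes are distinct elements of a finite set $Y\subset\mathbb{R}^d_{\ge 0}$, with $\mathcal{V}\neq\emptyset$, every node incident to at least one edge, and no edge from a node to itself. For an edge $e$, $\mathbf{s}(e)$ is its source node, $\mathbf{t}(e)$ its target, $\mathbf{v}(e)=\mathbf{t}(e)-\mathbf{s}(e)$. Given positive rate constants $(k_e)$, $\mathcal{G}$ generates the system $\frac{d\mathbf{x}}{dt}=\sum_{e}k_e\mathbf{x}^{\mathbf{s}(e)}\mathbf{v}(e)$ ($\mathbf{x}^{\mathbf{y}}=\prod_i x_i^{y_i}$, $0^0=1$). $\mathcal{G}$ is weakly reversible if every edge lies in a directed cycle. A polynomial dynamical system is weakly reversible if it is generated, for some positive rate constants, by some weakly reversible network. The monomials of $f$ are those $\mathbf{x}^{\mathbf{y}}$ appearing in $f$ with nonzero (vector) coefficient. *)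

theory Defs
  imports "HOL-Analysis.Analysis"
begin

definition nonneg :: "real ^ 'd \<Rightarrow> bool" where
  "nonneg y \<longleftrightarrow> (\<forall>i. y $ i \<ge> 0)"

(* x^y = prod_i x_i^{y_i}, with the convention 0^0 = 1 (Isabelle's powr has 0 powr 0 = 0). *)
definition monom :: "real ^ 'd \<Rightarrow> real ^ 'd \<Rightarrow> real" where
  "monom x y = (\<Prod>i\<in>UNIV. if y $ i = 0 then 1 else (x $ i) powr (y $ i))"

(* A reaction network (E-graph), given by its finite set of edges (source, target);
   the node set is the set of nodes incident to some edge. *)
definition egraph :: "((real ^ 'd) \<times> (real ^ 'd)) set \<Rightarrow> bool" where
  "egraph E \<longleftrightarrow> finite E \<and> E \<noteq> {} \<and>
     (\<forall>(y, y') \<in> E. y \<noteq> y' \<and> nonneg y \<and> nonneg y')"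

definition weakly_reversible_graph :: "((real ^ 'd) \<times> (real ^ 'd)) set \<Rightarrow> bool" where
  "weakly_reversible_graph E \<longleftrightarrow> (\<forall>(y, y') \<in> E. (y', y) \<in> E\<^sup>*)"

definition source_nodes :: "((real ^ 'd) \<times> (real ^ 'd)) set \<Rightarrow> (real ^ 'd) set" where
  "source_nodes E = fst ` E"

definition mas_system ::
  "((real ^ 'd) \<times> (real ^ 'd)) set \<Rightarrow> ((real ^ 'd) \<times> (real ^ 'd) \<Rightarrow> real)
     \<Rightarrow> real ^ 'd \<Rightarrow> real ^ 'd" where
  "mas_system E k x = (\<Sum>e\<in>E. (k e * monom x (fst e)) *\<^sub>R (snd e - fst e))"

definition generated_by ::
  "(real ^ 'd \<Rightarrow> real ^ 'd) \<Rightarrow> ((real ^ 'd) \<times> (real ^ 'd)) set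
     \<Rightarrow> ((real ^ 'd) \<times> (real ^ 'd) \<Rightarrow> real) \<Rightarrow> bool" where
  "generated_by f E k \<longleftrightarrow> egraph E \<and> (\<forall>e\<in>E. k e > 0) \<and>
     (\<forall>x. nonneg x \<longrightarrow> f x = mas_system E k x)"

definition weakly_reversible_system :: "(real ^ 'd \<Rightarrow> real ^ 'd) \<Rightarrow> bool" where
  "weakly_reversible_system f \<longleftrightarrow>
     (\<exists>E k. weakly_reversible_graph E \<and> generated_by f E k)"

definition monomial_exponents :: "(real ^ 'd \<Rightarrow> real ^ 'd) \<Rightarrow> (real ^ 'd) set \<Rightarrow> bool" where
  "monomial_exponents f S \<longleftrightarrow> finite S \<and> (\<forall>y\<in>S. nonneg y) \<and>
     (\<exists>c. (\<forall>y\<in>S. c y \<noteq> 0) \<and> (\<forall>x. nonneg x \<longrightarrow> f x = (\<Sum>y\<in>S. monom x y *\<^sub>R c y)))"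

end

theory Submission
  imports Defs
begin

lemma powr_indep:
  fixes C :: "real \<Rightarrow> real"
  assumes fin: "finite R" and z: "\<And>s. s > 0 \<Longrightarrow> (\<Sum>r\<in>R. s powr r * C r) = 0"
    and rR: "r0 \<in> R"
  shows "C r0 = 0"
proof (rule ccontr)
  assume nz: "C r0 \<noteq> 0"
  define R' where "R' = {r\<in>R. C r \<noteq> 0}"
  have finR': "finite R'" using fin by (simp add: R'_def)
  have neR': "R' \<noteq> {}" using nz rR by (auto simp: R'_def)
  define m where "m = Max R'"
  have mR': "m \<in> R'" using finR' neR' by (simp add: m_def)
  have mmax: "r \<le> m" if "r \<in> R'" for r using finR' that by (simp add: m_def)
  have z': "(\<Sum>r\<in>R'. s powr r * C r) = 0" if "s > 0" for s
  proof -
    have "(\<Sum>r\<in>R'. s powr r * C r) = (\<Sum>r\<in>R. s powr r * C r)"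
      by (rule sum.mono_neutral_left) (auto simp: fin R'_def)
    then show ?thesis using z[OF that] by simp
  qed
  have ev: "eventually (\<lambda>s. 0 = (\<Sum>r\<in>R'. s powr (r - m) * C r)) at_top"
    using eventually_gt_at_top[of 0]
  proof eventually_elim
    case (elim s)
    have "(\<Sum>r\<in>R'. s powr (r - m) * C r) = (\<Sum>r\<in>R'. s powr r * C r) / s powr m"
      by (simp add: powr_diff sum_divide_distrib)
    then show ?case using z'[OF elim] by simp
  qed
  have lim: "((\<lambda>s. \<Sum>r\<in>R'. s powr (r - m) * C r) \<longlongrightarrow> (\<Sum>r\<in>R'. if r = m then C r else 0)) at_top"
  proof (rule tendsto_sum)
    fix r assume rr: "r \<in> R'"
    show "((\<lambda>s. s powr (r - m) * C r) \<longlongrightarrow> (if r = m then C r else 0)) at_top"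
    proof (cases "r = m")
      case True
      have ev2: "eventually (\<lambda>s. C r = s powr (r - m) * C r) at_top"
        using eventually_gt_at_top[of 0] by eventually_elim (simp add: True)
      show ?thesis unfolding if_P[OF True] by (rule Lim_transform_eventually[OF tendsto_const ev2])
    next
      case False
      with mmax[OF rr] have "r - m < 0" by simp
      then have "((\<lambda>s. s powr (r - m)) \<longlongrightarrow> 0) at_top"
        using tendsto_neg_powr[OF _ filterlim_ident] by blast
      then show ?thesis using False by (simp add: tendsto_mult_left_zero)
    qed
  qed
  have "(\<Sum>r\<in>R'. if r = m then C r else 0) = C m" using finR' mR' by simp
  with lim have lim2: "((\<lambda>s. \<Sum>r\<in>R'. s powr (r - m) * C r) \<longlongrightarrow> C m) at_top" by simp
  have lim0: "((\<lambda>s. \<Sum>r\<in>R'. s powr (r - m) * C r) \<longlongrightarrow> 0) at_top"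
    by (rule Lim_transform_eventually[OF tendsto_const ev])
  have "C m = 0" using tendsto_unique[OF _ lim2 lim0] by simp
  with mR' show False by (simp add: R'_def)
qed

lemma monom_pos:
  assumes "\<And>i. x $ i > 0"
  shows "monom x a = (\<Prod>i\<in>UNIV. (x $ i) powr (a $ i))"
  unfolding monom_def
proof (intro prod.cong refl)
  fix i show "(if a $ i = 0 then 1 else x $ i powr a $ i) = x $ i powr a $ i"
    using assms[of i] by auto
qed

lemma monom_scale:
  fixes x :: "real ^ 'd"
  assumes xp: "\<And>i. x $ i > 0" and s: "s > 0"
  shows "monom (\<chi> j. if j = i then s * x $ j else x $ j) a = s powr (a $ i) * monom x a"
proof -
  have xp': "\<And>j. (\<chi> j. if j = i then s * x $ j else x $ j) $ j > 0" using xp s by simp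
  have "monom (\<chi> j. if j = i then s * x $ j else x $ j) a
      = (\<Prod>j\<in>UNIV. (if j = i then s powr (a $ i) else 1) * (x $ j) powr (a $ j))"
    unfolding monom_pos[OF xp'] using s xp
    by (intro prod.cong) (auto simp: powr_mult less_imp_le)
  also have "\<dots> = s powr (a $ i) * monom x a"
    by (simp add: prod.distrib monom_pos[OF xp])
  finally show ?thesis .
qed

lemma monom_one: "monom (\<chi> j. 1) a = 1"
  by (simp add: monom_pos)

lemma monom_indep:
  fixes h :: "real ^ 'd \<Rightarrow> real"
  shows "finite A \<Longrightarrow> (\<And>x. (\<forall>i. x $ i > 0) \<Longrightarrow> (\<Sum>a\<in>A. h a * monom x a) = 0) \<Longrightarrow> a0 \<in> A \<Longrightarrow> h a0 = 0"
proof (induction "card A" arbitrary: A a0 rule: less_induct)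
  case less
  show ?case
  proof (cases "\<exists>a\<in>A. \<exists>b\<in>A. a \<noteq> b")
    case False
    then have "A = {a0}" using less.prems(3) by auto
    then show ?thesis using less.prems(2)[of "\<chi> j. 1"] by (simp add: monom_one)
  next
    case True
    then obtain a b where ab: "a \<in> A" "b \<in> A" "a \<noteq> b" by blast
    then obtain i where i: "a $ i \<noteq> b $ i" by (auto simp: vec_eq_iff)
    define Ar where "Ar = {c\<in>A. c $ i = a0 $ i}"
    have "Ar \<subseteq> A" by (auto simp: Ar_def)
    moreover have "\<not> (a \<in> Ar \<and> b \<in> Ar)" using i by (auto simp: Ar_def)
    ultimately have "Ar \<subset> A" using ab by blast
    then have card: "card Ar < card A" using less.prems(1) by (simp add: psubset_card_mono)
    have finAr: "finite Ar" using less.prems(1) by (simp add: Ar_def)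
    have a0Ar: "a0 \<in> Ar" using less.prems(3) by (simp add: Ar_def)
    show ?thesis
    proof (rule less.hyps[OF card finAr _ a0Ar])
      fix x :: "real ^ 'd" assume xp: "\<forall>i. x $ i > 0"
      define C where "C r = (\<Sum>c\<in>{c\<in>A. c $ i = r}. h c * monom x c)" for r
      have "C (a0 $ i) = 0"
      proof (rule powr_indep[of "(\<lambda>c. c $ i) ` A" C "a0 $ i"])
        show "finite ((\<lambda>c. c $ i) ` A)" using less.prems(1) by simp
        show "a0 $ i \<in> (\<lambda>c. c $ i) ` A" using less.prems(3) by simp
        fix s :: real assume s: "s > 0"
        have "0 = (\<Sum>c\<in>A. h c * monom (\<chi> j. if j = i then s * x $ j else x $ j) c)"
          using less.prems(2)[of "\<chi> j. if j = i then s * x $ j else x $ j"] xp s by simp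
        also have "\<dots> = (\<Sum>c\<in>A. s powr (c $ i) * (h c * monom x c))"
          using xp s by (simp add: monom_scale mult.left_commute)
        also have "\<dots> = (\<Sum>r\<in>(\<lambda>c. c $ i) ` A. \<Sum>c\<in>{c\<in>A. c $ i = r}. s powr (c $ i) * (h c * monom x c))"
          by (rule sum.image_gen[OF less.prems(1)])
        also have "\<dots> = (\<Sum>r\<in>(\<lambda>c. c $ i) ` A. s powr r * C r)"
          unfolding C_def sum_distrib_left by (intro sum.cong refl) auto
        finally show "(\<Sum>r\<in>(\<lambda>c. c $ i) ` A. s powr r * C r) = 0" by simp
      qed
      then show "(\<Sum>c\<in>Ar. h c * monom x c) = 0" by (simp add: C_def Ar_def)
    qed
  qed
qed

lemma monom_indep_vec:
  fixes g :: "real ^ 'd \<Rightarrow> real ^ 'e"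
  assumes "finite A" "\<And>x. (\<forall>i. x $ i > 0) \<Longrightarrow> (\<Sum>a\<in>A. monom x a *\<^sub>R g a) = 0" "a0 \<in> A"
  shows "g a0 = 0"
proof -
  have "g a0 $ k = 0" for k
  proof (rule monom_indep[of A "\<lambda>a. g a $ k"])
    fix x :: "real ^ 'd" assume "\<forall>i. x $ i > 0"
    then have "(\<Sum>a\<in>A. monom x a *\<^sub>R g a) $ k = 0" using assms(2) by simp
    then show "(\<Sum>a\<in>A. g a $ k * monom x a) = 0" by (simp add: mult.commute)
  qed (use assms in auto)
  then show ?thesis by (simp add: vec_eq_iff)
qed


definition wV :: "'a::real_vector set \<Rightarrow> ('a \<times> 'a \<Rightarrow> real) \<Rightarrow> 'a \<Rightarrow> 'a" where
  "wV V K a = (\<Sum>b\<in>V. K (a, b) *\<^sub>R (b - a))"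

definition goodK :: "'a set \<Rightarrow> ('a \<times> 'a \<Rightarrow> real) \<Rightarrow> bool" where
  "goodK V K \<longleftrightarrow> (\<forall>e. K e \<ge> 0) \<and> (\<forall>e. K e \<noteq> 0 \<longrightarrow> e \<in> V \<times> V) \<and> (\<forall>a. K (a, a) = 0) \<and>
     (\<forall>a b. K (a, b) > 0 \<longrightarrow> (b, a) \<in> {e. K e > 0}\<^sup>*) \<and> (\<exists>e. K e > 0)"

definition srcs :: "'a set \<Rightarrow> ('a \<times> 'a \<Rightarrow> real) \<Rightarrow> 'a set" where
  "srcs V K = {a\<in>V. \<exists>b. K (a, b) > 0}"

lemma sum_if_remove:
  fixes g :: "'b \<Rightarrow> 'a::ab_group_add"
  assumes "finite V" "y \<in> V"
  shows "(\<Sum>b\<in>V. if b = y then 0 else g b) = (\<Sum>b\<in>V. g b) - g y"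
proof -
  have "(\<Sum>b\<in>V. g b) = (\<Sum>b\<in>V. (if b = y then g y else 0) + (if b = y then 0 else g b))"
    by (intro sum.cong) auto
  also have "\<dots> = g y + (\<Sum>b\<in>V. if b = y then 0 else g b)"
    using assms by (simp add: sum.distrib)
  finally show ?thesis by simp
qed

lemma step:
  fixes K :: "'a::real_vector \<times> 'a \<Rightarrow> real"
  assumes fin: "finite V" and g: "goodK V K" and yV: "y \<in> V" and yb0: "K (y, b0) > 0"
    and wy: "wV V K y = 0"
  shows "\<exists>K'. goodK V K' \<and> (\<forall>a\<in>V. wV V K' a = wV V K a) \<and> srcs V K' \<subseteq> srcs V K - {y}"
proof -
  have nn: "\<And>e. K e \<ge> 0" and supp: "\<And>a b. K (a, b) \<noteq> 0 \<Longrightarrow> a \<in> V \<and> b \<in> V"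
    and diag: "\<And>a. K (a, a) = 0" and wr: "\<And>a b. K (a, b) > 0 \<Longrightarrow> (b, a) \<in> {e. K e > 0}\<^sup>*"
    using g unfolding goodK_def by auto
  define R where "R = {e. K e > 0}"
  define T where "T = (\<Sum>b\<in>V. K (y, b))"
  define K' where "K' = (\<lambda>(a, b). if a = y \<or> b = y \<or> a = b then 0 else K (a, b) + K (a, y) * K (y, b) / T)"
  define R' where "R' = {e. K' e > 0}"
  have b0V: "b0 \<in> V" using supp[of y b0] yb0 by simp
  have "K (y, b0) \<le> T" unfolding T_def using fin b0V nn by (intro member_le_sum) auto
  then have Tpos: "T > 0" using yb0 by simp
  have K'nn: "K' e \<ge> 0" for e using nn Tpos by (auto simp: K'_def split: prod.splits)
  have K'pos: "a \<noteq> y \<and> b \<noteq> y \<and> a \<noteq> b \<and> (K (a, b) > 0 \<or> (K (a, y) > 0 \<and> K (y, b) > 0))"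
    if "K' (a, b) > 0" for a b
  proof -
    have ne: "a \<noteq> y" "b \<noteq> y" "a \<noteq> b" using that by (auto simp: K'_def split: if_splits)
    show ?thesis
    proof (cases "K (a, b) > 0")
      case False
      then have "K (a, b) = 0" using nn[of "(a,b)"] by simp
      then have "K (a, y) * K (y, b) / T > 0" using that ne by (simp add: K'_def)
      then have "K (a, y) * K (y, b) > 0" using Tpos by (simp add: zero_less_divide_iff)
      then have "K (a, y) \<noteq> 0" "K (y, b) \<noteq> 0" by auto
      then show ?thesis using ne nn[of "(a,y)"] nn[of "(y,b)"] by simp
    qed (use ne in auto)
  qed
  have K'low1: "K' (a, b) \<ge> K (a, b)" if "a \<noteq> y" "b \<noteq> y" "a \<noteq> b" for a b
    using that nn[of "(a,y)"] nn[of "(y,b)"] Tpos by (simp add: K'_def)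
  have K'low2: "K' (a, b) \<ge> K (a, y) * K (y, b) / T" if "a \<noteq> y" "b \<noteq> y" "a \<noteq> b" for a b
    using that nn[of "(a,b)"] by (simp add: K'_def)
  have K'pos2: "K' (a, b) > 0" if "a \<noteq> y" "b \<noteq> y" "a \<noteq> b" "K (a, y) > 0" "K (y, b) > 0" for a b
  proof -
    have "K (a, y) * K (y, b) / T > 0" using that Tpos by simp
    then show ?thesis using K'low2[OF that(1-3)] by linarith
  qed
  have reach: "(c \<noteq> y \<longrightarrow> (a, c) \<in> R'\<^sup>*) \<and> (c = y \<longrightarrow> (\<exists>d. (a, d) \<in> R'\<^sup>* \<and> K (d, y) > 0 \<and> d \<noteq> y))"
    if "(a, c) \<in> R\<^sup>*" "a \<noteq> y" for a c
    using that(1)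
  proof (induction rule: rtrancl_induct)
    case base
    then show ?case using that(2) by simp
  next
    case (step b c)
    have Kbc: "K (b, c) > 0" using step.hyps(2) by (simp add: R_def)
    have bc: "b \<noteq> c" using Kbc diag[of b] by auto
    show ?case
    proof (cases "b = y")
      case False
      show ?thesis
      proof (cases "c = y")
        case False
        have "K' (b, c) > 0" using K'low1[of b c] \<open>b \<noteq> y\<close> False bc Kbc by simp
        then have "(b, c) \<in> R'" by (simp add: R'_def)
        then show ?thesis using step.IH \<open>b \<noteq> y\<close> False by auto
      next
        case True
        then show ?thesis using step.IH \<open>b \<noteq> y\<close> Kbc by auto
      qed
    next
      case True
      then have cy: "c \<noteq> y" using bc by simp
      obtain d where d: "(a, d) \<in> R'\<^sup>*" "K (d, y) > 0" "d \<noteq> y" using step.IH True by auto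
      show ?thesis
      proof (cases "d = c")
        case True
        then show ?thesis using d cy by simp
      next
        case False
        have "K' (d, c) > 0" using K'pos2[of d c] d cy False Kbc \<open>b = y\<close> by simp
        then have "(d, c) \<in> R'" by (simp add: R'_def)
        then show ?thesis using d cy by auto
      qed
    qed
  qed
  have good': "goodK V K'"
    unfolding goodK_def
  proof (intro conjI allI impI)
    show "\<And>e. 0 \<le> K' e" by (rule K'nn)
  next
    fix e assume "K' e \<noteq> 0"
    then have "K' e > 0" using K'nn[of e] by simp
    moreover obtain a b where e: "e = (a, b)" by (cases e)
    ultimately have "K (a, b) > 0 \<or> (K (a, y) > 0 \<and> K (y, b) > 0)" using K'pos by simp
    then have "a \<in> V \<and> b \<in> V" using supp[of a b] supp[of a y] supp[of y b] by auto
    then show "e \<in> V \<times> V" using e by simp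
  next
    fix a show "K' (a, a) = 0" by (simp add: K'_def)
  next
    fix a b assume "K' (a, b) > 0"
    then have ab: "a \<noteq> y" "b \<noteq> y" "K (a, b) > 0 \<or> (K (a, y) > 0 \<and> K (y, b) > 0)"
      using K'pos by auto
    have "(b, a) \<in> R\<^sup>*"
    proof (cases "K (a, b) > 0")
      case True then show ?thesis using wr unfolding R_def by blast
    next
      case False
      then have "K (a, y) > 0" "K (y, b) > 0" using ab by auto
      then have "(b, y) \<in> R\<^sup>*" "(y, a) \<in> R\<^sup>*" using wr unfolding R_def by blast+
      then show ?thesis by simp
    qed
    then show "(b, a) \<in> {e. K' e > 0}\<^sup>*" using reach[of b a] ab unfolding R'_def by auto
  next
    have "(b0, y) \<in> R\<^sup>*" using wr[OF yb0] by (simp add: R_def)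
    moreover have "b0 \<noteq> y" using yb0 diag[of y] by auto
    ultimately obtain z where "(z, y) \<in> R" by (blast elim: rtranclE)
    then have Kzy: "K (z, y) > 0" by (simp add: R_def)
    then have zy: "z \<noteq> y" using diag[of y] by auto
    have "\<exists>b. K (y, b) > 0 \<and> b \<noteq> z"
    proof (rule ccontr)
      assume na: "\<not> ?thesis"
      have only: "K (y, b) = 0" if "b \<noteq> z" for b
      proof -
        have "\<not> K (y, b) > 0" using na that by blast
        then show ?thesis using nn[of "(y, b)"] by simp
      qed
      have zV: "z \<in> V" using supp[of z y] Kzy by simp
      have Kyz: "K (y, z) > 0" using yb0 only[of b0] by (cases "b0 = z") auto
      have "wV V K y = (\<Sum>b\<in>V. if b = z then K (y, z) *\<^sub>R (z - y) else 0)"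
        unfolding wV_def by (intro sum.cong) (auto simp: only)
      also have "\<dots> = K (y, z) *\<^sub>R (z - y)" using fin zV by simp
      finally have "K (y, z) *\<^sub>R (z - y) = 0" using wy by simp
      then show False using Kyz zy by simp
    qed
    then obtain b where b: "K (y, b) > 0" "b \<noteq> z" by blast
    have "b \<noteq> y" using b diag[of y] by auto
    then have "K' (z, b) > 0" using K'pos2[of z b] zy b Kzy by simp
    then show "\<exists>e. K' e > 0" by blast
  qed
  have wpres: "wV V K' a = wV V K a" if aV: "a \<in> V" for a
  proof (cases "a = y")
    case True
    then show ?thesis using wy by (simp add: wV_def K'_def)
  next
    case False
    have trm: "K' (a, b) *\<^sub>R (b - a) = (if b = y then 0 else K (a, b) *\<^sub>R (b - a))
        + (K (a, y) / T) *\<^sub>R (if b = y then 0 else K (y, b) *\<^sub>R (b - a))" for b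
      using False by (auto simp: K'_def scaleR_add_left)
    have s2: "(\<Sum>b\<in>V. K (y, b) *\<^sub>R (b - a)) = T *\<^sub>R (y - a)"
    proof -
      have "(\<Sum>b\<in>V. K (y, b) *\<^sub>R (b - a)) = (\<Sum>b\<in>V. K (y, b) *\<^sub>R (b - y) + K (y, b) *\<^sub>R (y - a))"
        by (intro sum.cong) (auto simp: scaleR_right_distrib[symmetric])
      also have "\<dots> = wV V K y + T *\<^sub>R (y - a)"
        by (simp add: sum.distrib wV_def T_def scaleR_sum_left)
      finally show ?thesis using wy by simp
    qed
    have "wV V K' a = (\<Sum>b\<in>V. if b = y then 0 else K (a, b) *\<^sub>R (b - a))
        + (K (a, y) / T) *\<^sub>R (\<Sum>b\<in>V. if b = y then 0 else K (y, b) *\<^sub>R (b - a))"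
      unfolding wV_def trm by (simp add: sum.distrib scaleR_sum_right)
    also have "\<dots> = wV V K a - K (a, y) *\<^sub>R (y - a) + (K (a, y) / T) *\<^sub>R (T *\<^sub>R (y - a))"
      using sum_if_remove[OF fin yV, of "\<lambda>b. K (a, b) *\<^sub>R (b - a)"]
        sum_if_remove[OF fin yV, of "\<lambda>b. K (y, b) *\<^sub>R (b - a)"] s2 diag[of y]
      by (simp add: wV_def)
    also have "\<dots> = wV V K a" using Tpos by simp
    finally show ?thesis .
  qed
  have "srcs V K' \<subseteq> srcs V K - {y}"
  proof
    fix a assume "a \<in> srcs V K'"
    then obtain b where "a \<in> V" "K' (a, b) > 0" by (auto simp: srcs_def)
    then show "a \<in> srcs V K - {y}" using K'pos[of a b] by (auto simp: srcs_def)
  qed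
  then show ?thesis using good' wpres by blast
qed

lemma reduce_all:
  fixes K :: "'a::real_vector \<times> 'a \<Rightarrow> real"
  assumes fin: "finite V"
  shows "goodK V K \<Longrightarrow> \<exists>K'. goodK V K' \<and> (\<forall>a\<in>V. wV V K' a = wV V K a) \<and>
           (\<forall>a b. K' (a, b) > 0 \<longrightarrow> wV V K' a \<noteq> 0)"
proof (induction "card (srcs V K)" arbitrary: K rule: less_induct)
  case less
  show ?case
  proof (cases "\<forall>a b. K (a, b) > 0 \<longrightarrow> wV V K a \<noteq> 0")
    case True
    then show ?thesis using less.prems by blast
  next
    case False
    then obtain y b where yb: "K (y, b) > 0" "wV V K y = 0" by blast
    have "\<forall>e. K e \<noteq> 0 \<longrightarrow> e \<in> V \<times> V" using less.prems by (simp add: goodK_def)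
    moreover have "K (y, b) \<noteq> 0" using yb(1) by simp
    ultimately have "(y, b) \<in> V \<times> V" by blast
    then have yV: "y \<in> V" by simp
    obtain K1 where K1: "goodK V K1" "\<forall>a\<in>V. wV V K1 a = wV V K a" "srcs V K1 \<subseteq> srcs V K - {y}"
      using step[OF fin less.prems yV yb] by blast
    have "y \<in> srcs V K" using yV yb by (auto simp: srcs_def)
    moreover have "finite (srcs V K)" using fin by (simp add: srcs_def)
    moreover have "srcs V K1 \<subset> srcs V K" using K1(3) \<open>y \<in> srcs V K\<close> by blast
    ultimately have "card (srcs V K1) < card (srcs V K)" by (simp add: psubset_card_mono)
    then obtain K2 where "goodK V K2" "\<forall>a\<in>V. wV V K2 a = wV V K1 a"
      "\<forall>a b. K2 (a, b) > 0 \<longrightarrow> wV V K2 a \<noteq> 0"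
      using less.hyps[OF _ K1(1)] by blast
    then show ?thesis using K1(2) by auto
  qed
qed


lemma mas_eq:
  fixes K :: "(real ^ 'd) \<times> (real ^ 'd) \<Rightarrow> real"
  assumes fin: "finite V" and nn: "\<And>e. K e \<ge> 0" and supp: "\<And>e. K e \<noteq> 0 \<Longrightarrow> e \<in> V \<times> V"
  shows "mas_system {e. K e > 0} K x = (\<Sum>a\<in>V. monom x a *\<^sub>R wV V K a)"
proof -
  have "mas_system {e. K e > 0} K x = (\<Sum>e\<in>V \<times> V. (K e * monom x (fst e)) *\<^sub>R (snd e - fst e))"
    unfolding mas_system_def
  proof (rule sum.mono_neutral_left)
    show "finite (V \<times> V)" using fin by simp
    show "{e. K e > 0} \<subseteq> V \<times> V"
    proof
      fix e assume "e \<in> {e. K e > 0}"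
      then have "K e \<noteq> 0" by simp
      then show "e \<in> V \<times> V" by (rule supp)
    qed
    show "\<forall>e\<in>V \<times> V - {e. K e > 0}. (K e * monom x (fst e)) *\<^sub>R (snd e - fst e) = 0"
    proof
      fix e assume "e \<in> V \<times> V - {e. K e > 0}"
      then have "K e = 0" using nn[of e] by simp
      then show "(K e * monom x (fst e)) *\<^sub>R (snd e - fst e) = 0" by simp
    qed
  qed
  also have "\<dots> = (\<Sum>a\<in>V. \<Sum>b\<in>V. (K (a, b) * monom x a) *\<^sub>R (b - a))"
    by (simp add: sum.cartesian_product split_def)
  also have "\<dots> = (\<Sum>a\<in>V. monom x a *\<^sub>R wV V K a)"
    unfolding wV_def scaleR_sum_right by (simp add: mult.commute)
  finally show ?thesis .
qed

theorem theorem4: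
  fixes f :: "real ^ 'd \<Rightarrow> real ^ 'd" and S :: "(real ^ 'd) set"
  assumes "weakly_reversible_system f"
    and "monomial_exponents f S"
  shows "\<exists>E k. weakly_reversible_graph E \<and> generated_by f E k \<and> source_nodes E = S"
proof -
  obtain E k where wr: "weakly_reversible_graph E" and gen: "generated_by f E k"
    using assms(1) unfolding weakly_reversible_system_def by blast
  have eg: "egraph E" and kpos: "\<And>e. e \<in> E \<Longrightarrow> k e > 0"
    and fE: "\<And>x. nonneg x \<Longrightarrow> f x = mas_system E k x"
    using gen unfolding generated_by_def by auto
  have finE: "finite E" and neE: "E \<noteq> {}" and Eprop: "\<And>y y'. (y, y') \<in> E \<Longrightarrow> y \<noteq> y' \<and> nonneg y \<and> nonneg y'"
    using eg unfolding egraph_def by auto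
  obtain c where finS: "finite S" and cnz: "\<And>y. y \<in> S \<Longrightarrow> c y \<noteq> 0"
    and fS: "\<And>x. nonneg x \<Longrightarrow> f x = (\<Sum>y\<in>S. monom x y *\<^sub>R c y)"
    using assms(2) unfolding monomial_exponents_def by blast
  define V where "V = fst ` E \<union> snd ` E"
  have finV: "finite V" using finE by (simp add: V_def)
  have Vnn: "nonneg v" if "v \<in> V" for v using that Eprop by (auto simp: V_def)
  define K0 where "K0 e = (if e \<in> E then k e else 0)" for e
  have K0E: "{e. K0 e > 0} = E" using kpos by (auto simp: K0_def)
  have good0: "goodK V K0"
    unfolding goodK_def
  proof (intro conjI allI impI)
    show "\<And>e. 0 \<le> K0 e" using kpos by (simp add: K0_def less_imp_le)
    show "e \<in> V \<times> V" if "K0 e \<noteq> 0" for e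
      using that by (cases e) (force simp: K0_def V_def split: if_splits)
    show "K0 (a, a) = 0" for a using Eprop[of a a] by (auto simp: K0_def)
    show "(b, a) \<in> {e. K0 e > 0}\<^sup>*" if "K0 (a, b) > 0" for a b
      using that wr unfolding K0E weakly_reversible_graph_def
      by (auto simp: K0_def split: if_splits)
    show "\<exists>e. K0 e > 0" using neE K0E by auto
  qed
  obtain K where gK: "goodK V K" and wK: "\<forall>a\<in>V. wV V K a = wV V K0 a"
    and nzK: "\<And>a b. K (a, b) > 0 \<Longrightarrow> wV V K a \<noteq> 0"
    using reduce_all[OF finV good0] by blast
  have nnK: "\<And>e. K e \<ge> 0" and suppK: "\<And>e. K e \<noteq> 0 \<Longrightarrow> e \<in> V \<times> V"
    and diagK: "\<And>a. K (a, a) = 0" and wrK: "\<And>a b. K (a, b) > 0 \<Longrightarrow> (b, a) \<in> {e. K e > 0}\<^sup>*"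
    and neK: "\<exists>e. K e > 0"
    using gK unfolding goodK_def by auto
  have nn0: "\<And>e. K0 e \<ge> 0" and supp0: "\<And>e. K0 e \<noteq> 0 \<Longrightarrow> e \<in> V \<times> V"
    using good0 unfolding goodK_def by auto
  define E' where "E' = {e. K e > 0}"
  have fK: "f x = (\<Sum>a\<in>V. monom x a *\<^sub>R wV V K a)" if "nonneg x" for x
  proof -
    have "f x = mas_system E k x" using fE[OF that] .
    also have "\<dots> = mas_system {e. K0 e > 0} K0 x"
      unfolding K0E mas_system_def by (intro sum.cong) (auto simp: K0_def)
    also have "\<dots> = (\<Sum>a\<in>V. monom x a *\<^sub>R wV V K0 a)" by (rule mas_eq[OF finV nn0 supp0])
    also have "\<dots> = (\<Sum>a\<in>V. monom x a *\<^sub>R wV V K a)" using wK by simp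
    finally show ?thesis .
  qed
  have mK: "mas_system E' K x = (\<Sum>a\<in>V. monom x a *\<^sub>R wV V K a)" for x
    unfolding E'_def by (rule mas_eq[OF finV nnK suppK])
  define G where "G a = (if a \<in> V then wV V K a else 0) - (if a \<in> S then c a else 0)" for a
  have G0: "G a = 0" if "a \<in> V \<union> S" for a
  proof (rule monom_indep_vec[of "V \<union> S" G])
    show "finite (V \<union> S)" using finV finS by simp
    show "a \<in> V \<union> S" by (rule that)
    fix x :: "real ^ 'd" assume xp: "\<forall>i. x $ i > 0"
    then have xnn: "nonneg x" by (simp add: nonneg_def less_imp_le)
    have s1: "(\<Sum>a\<in>V \<union> S. monom x a *\<^sub>R (if a \<in> V then wV V K a else 0)) = (\<Sum>a\<in>V. monom x a *\<^sub>R wV V K a)"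
      by (rule sum.mono_neutral_cong_right) (use finV finS in auto)
    have s2: "(\<Sum>a\<in>V \<union> S. monom x a *\<^sub>R (if a \<in> S then c a else 0)) = (\<Sum>a\<in>S. monom x a *\<^sub>R c a)"
      by (rule sum.mono_neutral_cong_right) (use finV finS in auto)
    show "(\<Sum>a\<in>V \<union> S. monom x a *\<^sub>R G a) = 0"
      unfolding G_def scaleR_diff_right sum_subtractf s1 s2
      using fK[OF xnn] fS[OF xnn] by simp
  qed
  have src: "source_nodes E' = S"
  proof
    show "source_nodes E' \<subseteq> S"
    proof
      fix a assume "a \<in> source_nodes E'"
      then obtain b where ab: "K (a, b) > 0" by (auto simp: source_nodes_def E'_def)
      then have aV: "a \<in> V" using suppK[of "(a,b)"] by auto
      have "wV V K a \<noteq> 0" using nzK[OF ab] .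
      then show "a \<in> S" using G0[of a] aV by (auto simp: G_def split: if_splits)
    qed
  next
    show "S \<subseteq> source_nodes E'"
    proof
      fix a assume aS: "a \<in> S"
      then have "(if a \<in> V then wV V K a else 0) = c a" using G0[of a] by (simp add: G_def)
      then have aV: "a \<in> V" and wa: "wV V K a \<noteq> 0" using cnz[OF aS] by (auto split: if_splits)
      have "\<exists>b. K (a, b) \<noteq> 0"
      proof (rule ccontr)
        assume "\<not> ?thesis"
        then have "wV V K a = 0" by (simp add: wV_def)
        then show False using wa by simp
      qed
      then obtain b where "K (a, b) \<noteq> 0" by blast
      then have "K (a, b) > 0" using nnK[of "(a,b)"] by simp
      then show "a \<in> source_nodes E'" by (force simp: source_nodes_def E'_def)
    qed
  qed
  have wrE': "weakly_reversible_graph E'"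
    unfolding weakly_reversible_graph_def E'_def using wrK by auto
  have egE': "egraph E'"
    unfolding egraph_def
  proof (intro conjI)
    show "finite E'"
    proof (rule finite_subset[of _ "V \<times> V"])
      show "finite (V \<times> V)" using finV by simp
      show "E' \<subseteq> V \<times> V"
      proof
        fix e assume "e \<in> E'"
        then have "K e \<noteq> 0" by (simp add: E'_def)
        then show "e \<in> V \<times> V" by (rule suppK)
      qed
    qed
    show "E' \<noteq> {}" using neK by (auto simp: E'_def)
    show "\<forall>(y, y')\<in>E'. y \<noteq> y' \<and> nonneg y \<and> nonneg y'"
    proof (clarify)
      fix y y' assume "(y, y') \<in> E'"
      then have "K (y, y') > 0" by (simp add: E'_def)
      then have "y \<noteq> y'" "(y, y') \<in> V \<times> V" using diagK[of y] suppK[of "(y,y')"] by auto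
      then show "y \<noteq> y' \<and> nonneg y \<and> nonneg y'" using Vnn by auto
    qed
  qed
  have "generated_by f E' K"
    unfolding generated_by_def using egE' fK mK by (auto simp: E'_def)
  then show ?thesis using wrE' src by blast
qed

end
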